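(* Let $p\ge 2$, $d\in\{0,\dots,9\}$ and $i\in\{10^{p-2},\dots,10^{p-1}-1\}$ be integers. The sequence $\big(P_{(d,(10i+d+1)10^{n-p+1}-1,p)}\big)_{n\ge p}$ converges, as $n\to\infty$, to $$\frac{\alpha_{(d,p)}10^{p-1}+i+1-10^{p-2}-d\,k_{(d,p,i)}-9l_{(d,p,i)}+m_{(d,p,i)}+n_{(d,p,i)}+10^{p-2}\ln\big(\frac{10^{p-1}+d}{10^{p-1}}\big)}{10i+d+1},$$ where $k_{(d,p,i)}=\sum_{j=10^{p-2}}^{i}\ln\frac{10j+d+1}{10j+d}$, $l_{(d,p,i)}=\sum_{j=10^{p-2}}^{i}j\ln\frac{10j+d+1}{10j+d}$, $m_{(d,p,i)}=\sum_{j=10^{p-2}}^{i-1}\ln\frac{10(j+1)+d}{10j+d+1}$, $n_{(d,p,i)}=\sum_{j=10^{p-2}}^{i-1}j\ln\frac{10(j+1)+d}{10j+d+1}$, and $$\alpha_{(d,p)}=\frac{1}{10}+\frac{n_{(d,p)}+m_{(d,p)}-9l_{(d,p)}-d\,k_{(d,p)}}{9\times10^{p-1}}+\frac{1}{90}\ln\Big(\frac{10^{p-1}+d}{10^{p-1}}\Big)+\frac{1}{9}\ln\Big(\frac{10^{p}}{10^{p}-10+d+1}\Big)$$ with $k_{(d,p)}=k_{(d,p,10^{p-1}-1)}$, $l_{(d,p)}=l_{(d,p,10^{p-1}-1)}$, $m_{(d,p)}=\sum_{j=10^{p-2}}^{10^{p-1}-2}\ln\frac{10(j+1)+d}{10j+d+1}$,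 $n_{(d,p)}=\sum_{j=10^{p-2}}^{10^{p-1}-2}j\ln\frac{10(j+1)+d}{10j+d+1}$.
   Context: For an integer $x\ge 10^{p-1}$, the "$p$-th digit of $x$" is the $p$-th digit of its decimal expansion counted from the left. For $d\in\{0,\dots,9\}$ and $m\ge 10^{p-1}$, let $N_d(m)$ be the number of integers $x$ with $10^{p-1}\le x\le m$ whose $p$-th digit is $d$. For $N\ge 10^{p-1}$, $$P_{(d,N,p)}=\frac{1}{N+1-10^{p-1}}\sum_{m=10^{p-1}}^{N}\frac{N_d(m)}{m+1-10^{p-1}},$$ the probability that the $p$-th digit of $x$ is $d$ when $m$ is chosen uniformly in $\{10^{p-1},\dots,N\}$ and then $x$ uniformly in $\{10^{p-1},\dots,m\}$. The number $\alpha_{(d,p)}$ is the limit of $P_{(d,10^n-1,p)}$ as $n\to\infty$. Here $\ln$ is the natural logarithm and empty sums are zero. *)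

theory Defs
  imports Complex_Main
begin

definition num_digits :: "nat \<Rightarrow> nat" where
  "num_digits x = (LEAST k. x < 10 ^ k)"

(* p-th decimal digit of x counted from the left (meaningful for x \<ge> 10^(p-1), p \<ge> 1) *)
definition digit_at :: "nat \<Rightarrow> nat \<Rightarrow> nat" where
  "digit_at p x = (x div 10 ^ (num_digits x - p)) mod 10"

definition Ncount :: "nat \<Rightarrow> nat \<Rightarrow> nat \<Rightarrow> nat" where
  "Ncount d p m = card {x. 10 ^ (p - 1) \<le> x \<and> x \<le> m \<and> digit_at p x = d}"

definition Pprob :: "nat \<Rightarrow> nat \<Rightarrow> nat \<Rightarrow> real" where
  "Pprob d N p = (1 / real (N + 1 - 10 ^ (p - 1))) *
     (\<Sum>m = 10 ^ (p - 1)..N. real (Ncount d p m) / real (m + 1 - 10 ^ (p - 1)))"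

definition kk :: "nat \<Rightarrow> nat \<Rightarrow> nat \<Rightarrow> real" where
  "kk d p i = (\<Sum>j = 10 ^ (p - 2)..i. ln (real (10 * j + d + 1) / real (10 * j + d)))"

definition ll :: "nat \<Rightarrow> nat \<Rightarrow> nat \<Rightarrow> real" where
  "ll d p i = (\<Sum>j = 10 ^ (p - 2)..i. real j * ln (real (10 * j + d + 1) / real (10 * j + d)))"

definition mm :: "nat \<Rightarrow> nat \<Rightarrow> nat \<Rightarrow> real" where
  "mm d p i = (\<Sum>j \<in> {10 ^ (p - 2)..<i}. ln (real (10 * (j + 1) + d) / real (10 * j + d + 1)))"

definition nn :: "nat \<Rightarrow> nat \<Rightarrow> nat \<Rightarrow> real" where
  "nn d p i = (\<Sum>j \<in> {10 ^ (p - 2)..<i}. real j * ln (real (10 * (j + 1) + d) / real (10 * j + d + 1)))"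

(* closed form for alpha_{(d,p)}; m_{(d,p)}, n_{(d,p)} run j = 10^(p-2) .. 10^(p-1)-2,
   i.e. mm/nn with upper (exclusive) bound 10^(p-1)-1 *)
definition alpha_formula :: "nat \<Rightarrow> nat \<Rightarrow> real" where
  "alpha_formula d p =
     1 / 10
     + (nn d p (10 ^ (p - 1) - 1) + mm d p (10 ^ (p - 1) - 1)
        - 9 * ll d p (10 ^ (p - 1) - 1) - real d * kk d p (10 ^ (p - 1) - 1)) / (9 * 10 ^ (p - 1))
     + (1 / 90) * ln ((10 ^ (p - 1) + real d) / 10 ^ (p - 1))
     + (1 / 9) * ln (10 ^ p / (10 ^ p - 10 + real d + 1))"

end

theory Submission
  imports Defs "HOL-Analysis.Analysis"
begin



locale digs = fixes d p :: nat assumes p2: "p \<ge> 2" and d9: "d \<le> 9"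
begin

definition K :: nat where "K = 10 ^ (p - 2)"
definition L :: nat where "L = 10 ^ (p - 1)"

lemma L_K: "L = 10 * K"
proof -
  have "p - 1 = Suc (p - 2)" using p2 by simp
  then show ?thesis unfolding L_def K_def by simp
qed

lemma K_pos: "K \<ge> 1" unfolding K_def by simp

lemma L_ge: "L \<ge> 10" using L_K K_pos by simp

lemma num_digits_eq:
  assumes "L * 10 ^ e \<le> x" "x < 10 * L * 10 ^ e"
  shows "num_digits x = p + e"
  unfolding num_digits_def
proof (rule Least_equality)
  have "10 * L * 10 ^ e = (10::nat) ^ (p + e)"
    using p2 unfolding L_def by (simp add: power_add[symmetric] Suc_diff_le[symmetric] power_Suc[symmetric])
  then show "x < 10 ^ (p + e)" using assms by simp
next
  fix y assume y: "x < 10 ^ y"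
  show "p + e \<le> y"
  proof (rule ccontr)
    assume "\<not> p + e \<le> y"
    then have "y \<le> p - 1 + e" by simp
    then have "(10::nat) ^ y \<le> 10 ^ (p - 1 + e)" by (rule power_increasing) simp
    also have "\<dots> = L * 10 ^ e" unfolding L_def by (simp add: power_add)
    finally show False using y assms by simp
  qed
qed

lemma digit_block:
  assumes "L \<le> q" "q < 10 * L" "r < 10 ^ e"
  shows "digit_at p (q * 10 ^ e + r) = q mod 10"
proof -
  have "L * 10 ^ e \<le> q * 10 ^ e" using assms(1) by simp
  then have a: "L * 10 ^ e \<le> q * 10 ^ e + r" by (rule trans_le_add1)
  have "q * 10 ^ e + r < (q + 1) * 10 ^ e" using assms by simp
  also have "\<dots> \<le> 10 * L * 10 ^ e" using assms by (intro mult_right_mono) auto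
  finally have "num_digits (q * 10 ^ e + r) = p + e" using a num_digits_eq by blast
  then show ?thesis unfolding digit_at_def using assms by simp
qed

lemma Ncount_small: "m < L \<Longrightarrow> Ncount d p m = 0"
  unfolding Ncount_def L_def[symmetric] by auto

lemma Ncount_Suc:
  assumes "L \<le> Suc m"
  shows "Ncount d p (Suc m) = Ncount d p m + (if digit_at p (Suc m) = d then 1 else 0)"
proof -
  define S where "S m = {x. L \<le> x \<and> x \<le> m \<and> digit_at p x = d}" for m
  have fin: "finite (S m)" unfolding S_def by (rule finite_subset[of _ "{..m}"]) auto
  have nm: "Suc m \<notin> S m" unfolding S_def by auto
  have "S (Suc m) = (if digit_at p (Suc m) = d then insert (Suc m) (S m) else S m)"
    unfolding S_def using assms by (auto simp: le_Suc_eq)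
  then have "card (S (Suc m)) = card (S m) + (if digit_at p (Suc m) = d then 1 else 0)"
    using fin nm by auto
  then show ?thesis unfolding Ncount_def S_def L_def .
qed

definition G :: "nat \<Rightarrow> nat" where "G q = q div 10 + (if d < q mod 10 then 1 else 0)"
definition s :: "nat \<Rightarrow> nat" where "s q = (if q mod 10 = d then 1 else 0)"

lemma G_Suc: "G (Suc q) = G q + s q"
proof (cases "q mod 10 = 9")
  case True
  then have "Suc q div 10 = q div 10 + 1" "Suc q mod 10 = 0" by presburger+
  then show ?thesis using True d9 unfolding G_def s_def by auto
next
  case False
  then have "Suc q div 10 = q div 10" "Suc q mod 10 = Suc (q mod 10)" by presburger+
  then show ?thesis using False unfolding G_def s_def by auto
qed

lemma L_le_block: assumes "L \<le> q" shows "L \<le> q * 10 ^ e"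
proof -
  have "(1::nat) \<le> 10 ^ e" by simp
  then have "q * 1 \<le> q * 10 ^ e" by (rule mult_le_mono2)
  then have "q \<le> q * 10 ^ e" by simp
  with assms show ?thesis by (rule le_trans)
qed

lemma Ncount_in_block:
  assumes "L \<le> q" "q < 10 * L" "r < 10 ^ e"
  shows "Ncount d p (q * 10 ^ e + r) = Ncount d p (q * 10 ^ e - 1) + s q * (r + 1)"
  using assms(3)
proof (induction r)
  case 0
  have Lq: "L \<le> q * 10 ^ e" using assms(1) by (rule L_le_block)
  then have "Suc (q * 10 ^ e - 1) = q * 10 ^ e" using L_ge by simp
  then show ?case using Ncount_Suc[of "q * 10 ^ e - 1"] digit_block[OF assms(1,2), of 0 e] Lq
    unfolding s_def by simp
next
  case (Suc r)
  have "L \<le> q * 10 ^ e" using assms(1) by (rule L_le_block)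
  then have "L \<le> Suc (q * 10 ^ e + r)" by simp
  then show ?case using Ncount_Suc[of "q * 10 ^ e + r"] digit_block[OF assms(1,2) Suc.prems] Suc
    unfolding s_def by simp
qed

lemma G_ge: "L \<le> q \<Longrightarrow> K \<le> G q" unfolding G_def using L_K by auto

lemma Ncount_level_q:
  assumes base: "Ncount d p (L * 10 ^ e - 1) = G L * 10 ^ e - K"
  and q: "L \<le> q"
  shows "q \<le> 10 * L \<longrightarrow> Ncount d p (q * 10 ^ e - 1) = G q * 10 ^ e - K"
  using q
proof (induction q rule: nat_induct_at_least)
  case base
  then show ?case using assms(1) by simp
next
  case (Suc q)
  show ?case
  proof
    assume le: "Suc q \<le> 10 * L"
    have M1: "(1::nat) \<le> 10 ^ e" by simp
    have "Suc q * 10 ^ e - 1 = q * 10 ^ e + (10 ^ e - 1)" using M1 by (simp add: algebra_simps)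
    then have "Ncount d p (Suc q * 10 ^ e - 1) = Ncount d p (q * 10 ^ e - 1) + s q * 10 ^ e"
      using Ncount_in_block[OF Suc.hyps, of "10 ^ e - 1" e] le M1 by simp
    also have "\<dots> = G q * 10 ^ e - K + s q * 10 ^ e" using Suc le by simp
    also have "\<dots> = (G q + s q) * 10 ^ e - K"
    proof -
      have "K * 1 \<le> G q * 10 ^ e" using G_ge[OF Suc.hyps] M1 by (rule mult_le_mono)
      then show ?thesis by (simp add: algebra_simps)
    qed
    finally show "Ncount d p (Suc q * 10 ^ e - 1) = G (Suc q) * 10 ^ e - K" by (simp add: G_Suc)
  qed
qed

lemma G_L: "G L = K" unfolding G_def using L_K by simp
lemma G_10L: "G (10 * L) = L" unfolding G_def by simp

lemma Ncount_level:
  "L \<le> q \<Longrightarrow> q \<le> 10 * L \<Longrightarrow> Ncount d p (q * 10 ^ e - 1) = G q * 10 ^ e - K"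
proof (induction e arbitrary: q)
  case 0
  have "Ncount d p (L * 10 ^ 0 - 1) = G L * 10 ^ 0 - K"
    using Ncount_small[of "L - 1"] L_ge G_L by simp
  then show ?case using Ncount_level_q 0 by blast
next
  case (Suc e)
  have "Ncount d p (L * 10 ^ Suc e - 1) = Ncount d p (10 * L * 10 ^ e - 1)" by (simp add: algebra_simps)
  also have "\<dots> = L * 10 ^ e - K" using Suc.IH[of "10 * L"] G_10L L_ge by simp
  also have "\<dots> = G L * 10 ^ Suc e - K" using G_L L_K by simp
  finally show ?case using Ncount_level_q Suc.prems by blast
qed

lemma Ncount_formula:
  assumes "L \<le> q" "q < 10 * L" "r < 10 ^ e"
  shows "Ncount d p (q * 10 ^ e + r) = G q * 10 ^ e - K + s q * (r + 1)"
  using Ncount_in_block[OF assms] Ncount_level[of q e] assms by simp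

end



context digs
begin

definition fm :: "nat \<Rightarrow> real" where
  "fm m = real (Ncount d p m) / real (m + 1 - L)"

definition bterm :: "nat \<Rightarrow> nat \<Rightarrow> nat \<Rightarrow> real" where
  "bterm M q r = (real (G q) * real M - real K + real (s q) * (real r + 1)) /
      (real q * real M + real r + 1 - real L)"

definition bs :: "nat \<Rightarrow> nat \<Rightarrow> real" where
  "bs M q = (\<Sum>r<M. bterm M q r)"

definition Jq :: "nat \<Rightarrow> real" where
  "Jq q = (real (G q) - real (s q) * real q) * ln ((real q + 1) / real q) + real (s q)"

lemma fm_block:
  assumes "L \<le> q" "q < 10 * L" "r < 10 ^ e"
  shows "fm (q * 10 ^ e + r) = bterm (10 ^ e) q r"
proof -
  have M1: "(1::nat) \<le> 10 ^ e" by simp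
  have KG: "K * 1 \<le> G q * 10 ^ e" using G_ge[OF assms(1)] M1 by (rule mult_le_mono)
  have Lq: "L \<le> q * 10 ^ e" using assms(1) by (rule L_le_block)
  have "real (Ncount d p (q * 10 ^ e + r)) = real (G q) * real (10 ^ e) - real K + real (s q) * (real r + 1)"
    using Ncount_formula[OF assms] KG by (simp add: of_nat_diff algebra_simps)
  moreover have "real (q * 10 ^ e + r + 1 - L) = real q * real (10 ^ e) + real r + 1 - real L"
    using Lq by (simp add: of_nat_diff)
  ultimately show ?thesis unfolding fm_def bterm_def by simp
qed

lemma harm_block: "(\<Sum>r<M. 1 / (real D + 1 + real r)) = harm (D + M) - (harm D :: real)"
  by (induction M) (simp_all add: harm_Suc inverse_eq_divide add_ac)

lemma bs_eq:
  assumes "L \<le> q" "M \<ge> 1"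
  shows "bs M q / real M = (real (G q) - real K / real M - real (s q) * (real q - real L / real M))
            * (harm (q * M - L + M) - harm (q * M - L)) + real (s q)"
proof -
  define D where "D = q * M - L"
  have Lq: "L \<le> q * M" using assms L_le_block
    by (metis le_trans mult.right_neutral mult_le_mono2)
  have rD: "real D = real q * real M - real L" unfolding D_def using Lq by (simp add: of_nat_diff)
  define A where "A = real (G q) * real M - real K"
  have t: "bterm M q r = (A - real (s q) * real D) * (1 / (real D + 1 + real r)) + real (s q)" for r
  proof -
    have pos: "real D + 1 + real r > 0" by simp
    have "bterm M q r = (A + real (s q) * (real r + 1)) / (real D + 1 + real r)"
      unfolding bterm_def A_def rD by (simp add: algebra_simps)
    also have "\<dots> = (A - real (s q) * real D) * (1 / (real D + 1 + real r)) + real (s q)"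
      using pos by (simp add: field_simps)
    finally show ?thesis .
  qed
  have "bs M q = (A - real (s q) * real D) * (\<Sum>r<M. 1 / (real D + 1 + real r)) + real M * real (s q)"
    unfolding bs_def t by (simp add: sum.distrib sum_distrib_left)
  also have "\<dots> = (A - real (s q) * real D) * (harm (D + M) - harm D) + real M * real (s q)"
    by (simp add: harm_block)
  finally have "bs M q / real M = ((A - real (s q) * real D) / real M) * (harm (D + M) - harm D) + real (s q)"
    using assms(2) by (simp add: field_simps)
  moreover have "(A - real (s q) * real D) / real M = real (G q) - real K / real M - real (s q) * (real q - real L / real M)"
    unfolding A_def rD using assms(2) by (simp add: field_simps)
  ultimately show ?thesis unfolding D_def by simp
qed

lemma harm_diff_lim:
  assumes "L \<le> q"
  shows "(\<lambda>M. harm (q * M - L + M) - harm (q * M - L) :: real) \<longlonglongrightarrow> ln ((real q + 1) / real q)"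
proof -
  have q1: "q \<ge> 1" using assms L_ge by simp
  define b where "b M = q * M - L" for M
  define a where "a M = b M + M" for M
  have fb: "filterlim b sequentially sequentially"
  proof (rule filterlim_at_top_mono[OF filterlim_minus_const_nat_at_top[of L]])
    show "\<forall>\<^sub>F x in sequentially. x - L \<le> b x"
      unfolding b_def using q1 by (auto intro!: always_eventually diff_le_mono)
  qed
  have fa: "filterlim a sequentially sequentially"
    by (rule filterlim_at_top_mono[OF fb]) (auto simp: a_def)
  have ga: "(\<lambda>M. harm (a M) - ln (real (a M)) :: real) \<longlonglongrightarrow> euler_mascheroni"
    using filterlim_compose[OF euler_mascheroni_LIMSEQ fa] by (simp add: o_def)
  have gb: "(\<lambda>M. harm (b M) - ln (real (b M)) :: real) \<longlonglongrightarrow> euler_mascheroni"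
    using filterlim_compose[OF euler_mascheroni_LIMSEQ fb] by (simp add: o_def)
  have la: "(\<lambda>M. ln (real (a M) / real M)) \<longlonglongrightarrow> ln (real q + 1)"
  proof -
    have "(\<lambda>M. real q + 1 - real L / real M) \<longlonglongrightarrow> real q + 1 - 0"
      by (intro tendsto_intros)
    then have "(\<lambda>M. ln (real q + 1 - real L / real M)) \<longlonglongrightarrow> ln (real q + 1)"
      by (intro tendsto_ln) auto
    moreover have "\<forall>\<^sub>F M in sequentially. ln (real q + 1 - real L / real M) = ln (real (a M) / real M)"
    proof (rule eventually_sequentiallyI[of 1])
      fix M :: nat assume M: "1 \<le> M"
      have "L \<le> q * M" using assms M by (metis le_trans mult.right_neutral mult_le_mono2)
      then have "real (a M) = real q * real M - real L + real M" unfolding a_def b_def by (simp add: of_nat_diff)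
      then have "real (a M) / real M = real q + 1 - real L / real M" using M by (simp add: field_simps)
      then show "ln (real q + 1 - real L / real M) = ln (real (a M) / real M)" by simp
    qed
    ultimately show ?thesis by (rule Lim_transform_eventually)
  qed
  have lb: "(\<lambda>M. ln (real (b M) / real M)) \<longlonglongrightarrow> ln (real q)"
  proof -
    have "(\<lambda>M. real q - real L / real M) \<longlonglongrightarrow> real q - 0"
      by (intro tendsto_intros)
    then have "(\<lambda>M. ln (real q - real L / real M)) \<longlonglongrightarrow> ln (real q)"
      using q1 by (intro tendsto_ln) auto
    moreover have "\<forall>\<^sub>F M in sequentially. ln (real q - real L / real M) = ln (real (b M) / real M)"
    proof (rule eventually_sequentiallyI[of 1])
      fix M :: nat assume M: "1 \<le> M"
      have "L \<le> q * M" using assms M by (metis le_trans mult.right_neutral mult_le_mono2)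
      then have "real (b M) = real q * real M - real L" unfolding b_def by (simp add: of_nat_diff)
      then have "real (b M) / real M = real q - real L / real M" using M by (simp add: field_simps)
      then show "ln (real q - real L / real M) = ln (real (b M) / real M)" by simp
    qed
    ultimately show ?thesis by (rule Lim_transform_eventually)
  qed
  have "(\<lambda>M. (harm (a M) - ln (real (a M))) - (harm (b M) - ln (real (b M)))
          + (ln (real (a M) / real M) - ln (real (b M) / real M)) :: real)
        \<longlonglongrightarrow> euler_mascheroni - euler_mascheroni + (ln (real q + 1) - ln (real q))"
    by (intro tendsto_intros ga gb la lb)
  then have T: "(\<lambda>M. (harm (a M) - ln (real (a M))) - (harm (b M) - ln (real (b M)))
          + (ln (real (a M) / real M) - ln (real (b M) / real M)) :: real)
        \<longlonglongrightarrow> ln ((real q + 1) / real q)"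
    using q1 by (simp add: ln_div)
  have "\<forall>\<^sub>F M in sequentially. (harm (a M) - ln (real (a M))) - (harm (b M) - ln (real (b M)))
          + (ln (real (a M) / real M) - ln (real (b M) / real M)) = harm (q * M - L + M) - harm (q * M - L)"
  proof (rule eventually_sequentiallyI[of "L + 1"])
    fix M :: nat assume M: "L + 1 \<le> M"
    have qM: "q * M \<ge> M" using q1 by simp
    have "L < q * M" using qM M by linarith
    then have bp: "b M > 0" unfolding b_def by simp
    then have ap: "a M > 0" unfolding a_def by simp
    have Mp: "M > 0" using M by simp
    show "(harm (a M) - ln (real (a M))) - (harm (b M) - ln (real (b M)))
          + (ln (real (a M) / real M) - ln (real (b M) / real M)) = harm (q * M - L + M) - harm (q * M - L)"
    proof -
      have e1: "ln (real (a M) / real M) = ln (real (a M)) - ln (real M)" using ap Mp by (simp add: ln_div)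
      have e2: "ln (real (b M) / real M) = ln (real (b M)) - ln (real M)" using bp Mp by (simp add: ln_div)
      have e3: "a M = q * M - L + M" "b M = q * M - L" by (simp_all add: a_def b_def)
      show ?thesis unfolding e1 e2 unfolding e3 by simp
    qed
  qed
  with T show ?thesis by (rule Lim_transform_eventually)
qed

lemma bs_lim:
  assumes "L \<le> q"
  shows "(\<lambda>M. bs M q / real M) \<longlonglongrightarrow> Jq q"
proof -
  have "(\<lambda>M. (real (G q) - real K / real M - real (s q) * (real q - real L / real M))
            * (harm (q * M - L + M) - harm (q * M - L)) + real (s q))
        \<longlonglongrightarrow> (real (G q) - 0 - real (s q) * (real q - 0)) * ln ((real q + 1) / real q) + real (s q)"
    by (intro tendsto_intros harm_diff_lim assms)
  moreover have "\<forall>\<^sub>F M in sequentially. (real (G q) - real K / real M - real (s q) * (real q - real L / real M))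
            * (harm (q * M - L + M) - harm (q * M - L)) + real (s q) = bs M q / real M"
    by (rule eventually_sequentiallyI[of 1]) (simp add: bs_eq[OF assms])
  ultimately show ?thesis unfolding Jq_def by (simp add: Lim_transform_eventually)
qed

end



lemma toeplitz10:
  fixes a W :: "nat \<Rightarrow> real"
  assumes a: "a \<longlonglongrightarrow> I" and W: "\<And>e. W (Suc e) = (W e + a e) / 10"
  shows "W \<longlonglongrightarrow> I / 9"
proof (rule LIMSEQ_I)
  fix r :: real assume r: "r > 0"
  define z where "z e = W e - I / 9" for e
  have z: "z (Suc e) = (z e + (a e - I)) / 10" for e unfolding z_def W by (simp add: field_simps)
  obtain N where N: "\<And>n. n \<ge> N \<Longrightarrow> norm (a n - I) < r / 2"
    using LIMSEQ_D[OF a, of "r / 2"] r by auto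
  have bound: "\<bar>z (N + j)\<bar> \<le> \<bar>z N\<bar> / 10 ^ j + r / 2" for j
  proof (induction j)
    case 0 then show ?case using r by simp
  next
    case (Suc j)
    have "\<bar>z (N + Suc j)\<bar> = \<bar>z (N + j) + (a (N + j) - I)\<bar> / 10" by (simp add: z)
    also have "\<dots> \<le> (\<bar>z (N + j)\<bar> + \<bar>a (N + j) - I\<bar>) / 10"
      by (intro divide_right_mono abs_triangle_ineq) simp
    also have "\<dots> \<le> (\<bar>z N\<bar> / 10 ^ j + r / 2 + r / 2) / 10"
      using Suc N[of "N + j"] by (intro divide_right_mono add_mono) auto
    also have "\<dots> \<le> \<bar>z N\<bar> / 10 ^ Suc j + r / 2" using r by (simp add: field_simps)
    finally show ?case .
  qed
  have lim0: "(\<lambda>j. \<bar>z N\<bar> / 10 ^ j) \<longlonglongrightarrow> 0"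
    by (intro LIMSEQ_divide_realpow_zero) auto
  have "r / 2 > 0" using r by simp
  from LIMSEQ_D[OF lim0 this] obtain J where J: "\<And>j. j \<ge> J \<Longrightarrow> norm (\<bar>z N\<bar> / 10 ^ j - 0) < r / 2"
    by blast
  show "\<exists>no. \<forall>n\<ge>no. norm (W n - I / 9) < r"
  proof (intro exI allI impI)
    fix n assume n: "n \<ge> N + J"
    define j where "j = n - N"
    have nj: "n = N + j" and jJ: "j \<ge> J" using n unfolding j_def by auto
    have "\<bar>z N\<bar> / 10 ^ j < r / 2" using J[OF jJ] by simp
    then show "norm (W n - I / 9) < r" using bound[of j] unfolding nj z_def by simp
  qed
qed

context digs
begin

definition U :: "nat \<Rightarrow> nat \<Rightarrow> real" where
  "U e c = (\<Sum>q\<in>{L..<c}. bs (10 ^ e) q)"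

definition Ic :: "nat \<Rightarrow> real" where
  "Ic c = (\<Sum>q\<in>{L..<c}. Jq q)"

lemma U_lim: "(\<lambda>e. U e c / 10 ^ e) \<longlonglongrightarrow> Ic c"
proof -
  have sm: "strict_mono (\<lambda>e::nat. (10::nat) ^ e)"
    unfolding strict_mono_def by (simp add: power_strict_increasing)
  have "(\<lambda>e. \<Sum>q\<in>{L..<c}. bs (10 ^ e) q / real (10 ^ e)) \<longlonglongrightarrow> Ic c"
    unfolding Ic_def
  proof (rule tendsto_sum)
    fix q assume "q \<in> {L..<c}"
    then have "L \<le> q" by simp
    from filterlim_compose[OF bs_lim[OF this] filterlim_subseq[OF sm]]
    show "(\<lambda>e. bs (10 ^ e) q / real (10 ^ e)) \<longlonglongrightarrow> Jq q" by (simp add: o_def)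
  qed
  then show ?thesis unfolding U_def by (simp add: sum_divide_distrib)
qed

lemma block_sum:
  assumes "L \<le> q" "q < 10 * L"
  shows "(\<Sum>m\<in>{q * 10 ^ e..<Suc q * 10 ^ e}. fm m) = bs (10 ^ e) q"
proof -
  have "(\<Sum>m\<in>{q * 10 ^ e..<Suc q * 10 ^ e}. fm m) = (\<Sum>m\<in>{0 + q * 10 ^ e..<10 ^ e + q * 10 ^ e}. fm m)"
    by (simp add: add.commute)
  also have "\<dots> = (\<Sum>r\<in>{0..<10 ^ e}. fm (r + q * 10 ^ e))" by (rule sum.shift_bounds_nat_ivl)
  also have "\<dots> = (\<Sum>r<10 ^ e. bterm (10 ^ e) q r)"
    using fm_block[OF assms] by (simp add: atLeast0LessThan add.commute)
  finally show ?thesis unfolding bs_def .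
qed

lemma V_decomp_q:
  assumes base: "(\<Sum>m\<in>{L..<L * 10 ^ e}. fm m) = (\<Sum>e'<e. U e' (10 * L)) + U e L"
  and c: "L \<le> c"
  shows "c \<le> 10 * L \<longrightarrow> (\<Sum>m\<in>{L..<c * 10 ^ e}. fm m) = (\<Sum>e'<e. U e' (10 * L)) + U e c"
  using c
proof (induction c rule: nat_induct_at_least)
  case base
  then show ?case using assms(1) by simp
next
  case (Suc c)
  show ?case
  proof
    assume le: "Suc c \<le> 10 * L"
    have "L \<le> c * 10 ^ e" using Suc.hyps by (rule L_le_block)
    moreover have "c * 10 ^ e \<le> Suc c * 10 ^ e" by simp
    ultimately have "(\<Sum>m\<in>{L..<Suc c * 10 ^ e}. fm m) =
        (\<Sum>m\<in>{L..<c * 10 ^ e}. fm m) + (\<Sum>m\<in>{c * 10 ^ e..<Suc c * 10 ^ e}. fm m)"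
      by (simp add: sum.atLeastLessThan_concat)
    also have "\<dots> = (\<Sum>e'<e. U e' (10 * L)) + U e c + bs (10 ^ e) c"
      using Suc le block_sum[OF Suc.hyps, of e] by simp
    also have "\<dots> = (\<Sum>e'<e. U e' (10 * L)) + U e (Suc c)"
      unfolding U_def using Suc.hyps by simp
    finally show "(\<Sum>m\<in>{L..<Suc c * 10 ^ e}. fm m) = (\<Sum>e'<e. U e' (10 * L)) + U e (Suc c)" .
  qed
qed

lemma V_decomp:
  "L \<le> c \<Longrightarrow> c \<le> 10 * L \<Longrightarrow> (\<Sum>m\<in>{L..<c * 10 ^ e}. fm m) = (\<Sum>e'<e. U e' (10 * L)) + U e c"
proof (induction e arbitrary: c)
  case 0
  have "(\<Sum>m\<in>{L..<L * 10 ^ 0}. fm m) = (\<Sum>e'<0. U e' (10 * L)) + U 0 L"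
    unfolding U_def by simp
  then show ?case using V_decomp_q 0 by blast
next
  case (Suc e)
  have "(\<Sum>m\<in>{L..<L * 10 ^ Suc e}. fm m) = (\<Sum>m\<in>{L..<(10 * L) * 10 ^ e}. fm m)"
    by (simp add: algebra_simps)
  also have "\<dots> = (\<Sum>e'<e. U e' (10 * L)) + U e (10 * L)" using Suc.IH[of "10 * L"] L_ge by simp
  also have "\<dots> = (\<Sum>e'<Suc e. U e' (10 * L)) + U (Suc e) L" unfolding U_def by simp
  finally show ?case using V_decomp_q Suc.prems by blast
qed

definition W :: "nat \<Rightarrow> real" where
  "W e = (\<Sum>e'<e. U e' (10 * L)) / 10 ^ e"

lemma W_lim: "W \<longlonglongrightarrow> Ic (10 * L) / 9"
proof (rule toeplitz10[OF U_lim])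
  fix e
  show "W (Suc e) = (W e + U e (10 * L) / 10 ^ e) / 10"
    unfolding W_def by (simp add: field_simps)
qed

lemma Pprob_eq:
  assumes "L < c" "c \<le> 10 * L"
  shows "Pprob d (c * 10 ^ e - 1) p = (W e + U e c / 10 ^ e) / (real c - real L / 10 ^ e)"
proof -
  have "c * 1 \<le> c * 10 ^ e" by (rule mult_le_mono2) simp
  then have Lc: "L < c * 10 ^ e" using assms(1) by linarith
  have s: "{10 ^ (p - 1)..c * 10 ^ e - 1} = {L..<c * 10 ^ e}" unfolding L_def[symmetric] using Lc by auto
  have n0: "c * 10 ^ e - 1 + 1 - 10 ^ (p - 1) = c * 10 ^ e - L"
    unfolding L_def[symmetric] using Lc by simp
  have n: "real (c * 10 ^ e - 1 + 1 - 10 ^ (p - 1)) = real c * 10 ^ e - real L"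
    unfolding n0 using Lc by (simp add: of_nat_diff)
  have "Pprob d (c * 10 ^ e - 1) p = (\<Sum>m\<in>{L..<c * 10 ^ e}. fm m) / (real c * 10 ^ e - real L)"
    unfolding Pprob_def s n fm_def L_def by simp
  also have "\<dots> = ((\<Sum>e'<e. U e' (10 * L)) + U e c) / (real c * 10 ^ e - real L)"
    using V_decomp[of c e] assms by simp
  also have "\<dots> = (W e + U e c / 10 ^ e) / (real c - real L / 10 ^ e)"
  proof -
    have M: "(10::real) ^ e \<noteq> 0" by simp
    have a1: "W e + U e c / 10 ^ e = ((\<Sum>e'<e. U e' (10 * L)) + U e c) / 10 ^ e"
      unfolding W_def by (simp add: add_divide_distrib)
    have a2: "real c - real L / 10 ^ e = (real c * 10 ^ e - real L) / 10 ^ e"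
      using M by (simp add: field_simps)
    show ?thesis unfolding a1 a2 using M by simp
  qed
  finally show ?thesis .
qed

lemma Pprob_lim:
  assumes "L < c" "c \<le> 10 * L"
  shows "(\<lambda>e. Pprob d (c * 10 ^ e - 1) p) \<longlonglongrightarrow> (Ic (10 * L) / 9 + Ic c) / real c"
proof -
  have "(\<lambda>e. (W e + U e c / 10 ^ e) / (real c - real L / 10 ^ e)) \<longlonglongrightarrow> (Ic (10 * L) / 9 + Ic c) / (real c - 0)"
    using assms by (intro tendsto_intros W_lim U_lim LIMSEQ_divide_realpow_zero) auto
  then show ?thesis using Pprob_eq[OF assms] by simp
qed

end



lemma sum_shift_n: "(\<Sum>q\<in>{c..<c + n}. f q) = (\<Sum>t<n. f (c + t))" for c n :: nat
  by (induction n) (simp_all add: add_ac)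

lemma tele: "(a::nat) > 0 \<Longrightarrow> (\<Sum>t<n. ln (real (Suc (a + t)) / real (a + t))) = ln (real (a + n) / real a)"
proof (induction n)
  case 0 then show ?case by simp
next
  case (Suc n)
  have "ln (real (a + n) / real a) + ln (real (Suc (a + n)) / real (a + n)) = ln (real (a + Suc n) / real a)"
    using Suc.prems by (simp add: ln_div)
  then show ?case using Suc by simp
qed

context digs
begin

lemma Jq_alt: "Jq q = (real (G q) - real (s q) * real q) * ln (real (Suc q) / real q) + real (s q)"
  unfolding Jq_def by (simp add: add.commute)

lemma dm10: "(10 * i + u) div 10 = i + u div 10" "(10 * i + u) mod 10 = u mod 10" for i u :: nat
  by simp_all

lemma small_u: "u < 10 \<Longrightarrow> u div 10 = 0 \<and> u mod 10 = (u::nat)" by simp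

lemma big_u: "10 \<le> u \<Longrightarrow> u < 20 \<Longrightarrow> u div 10 = 1 \<and> u mod 10 = (u::nat) - 10"
proof -
  assume a: "10 \<le> u" "u < 20"
  define v where "v = u - 10"
  have v: "u = 10 + v" "v < 10" using a unfolding v_def by auto
  show ?thesis unfolding v(1) using v(2) by simp
qed

lemma mid_facts: assumes "t < 9" shows "s (10 * i + d + 1 + t) = 0 \<and> G (10 * i + d + 1 + t) = Suc i"
proof -
  have e: "10 * i + d + 1 + t = 10 * i + (d + 1 + t)" by simp
  show ?thesis
  proof (cases "d + 1 + t < 10")
    case True
    then show ?thesis unfolding e G_def s_def dm10 using small_u[OF True] by simp
  next
    case False
    then have "10 \<le> d + 1 + t" "d + 1 + t < 20" using assms d9 by auto
    from big_u[OF this] have "(d + 1 + t) div 10 = 1" "(d + 1 + t) mod 10 = d + 1 + t - 10" by auto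
    moreover have "d + 1 + t - 10 \<noteq> d" "\<not> d < d + 1 + t - 10" using assms False by auto
    ultimately show ?thesis unfolding e G_def s_def dm10 by simp
  qed
qed

lemma end_facts: "s (10 * i + d + 10) = 1 \<and> G (10 * i + d + 10) = Suc i"
proof -
  have e: "10 * i + d + 10 = 10 * (Suc i) + d" by simp
  show ?thesis unfolding e G_def s_def dm10 using small_u[of d] d9 by simp
qed

lemma low_facts: assumes "t < d" shows "s (L + t) = 0 \<and> G (L + t) = K"
  unfolding G_def s_def L_K dm10 using small_u[of t] assms d9 by simp

lemma lowend_facts: "s (L + d) = 1 \<and> G (L + d) = K"
  unfolding G_def s_def L_K dm10 using small_u[of d] d9 by simp

end



context digs
begin

lemma L_pos: "L > 0" using L_ge by simp

lemma Ic_step: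
  assumes "K \<le> i"
  shows "Ic (10 * i + d + 11) = Ic (10 * i + d + 1)
     + real (Suc i) * ln (real (10 * i + d + 10) / real (10 * i + d + 1))
     + (real (Suc i) - real (10 * i + d + 10)) * ln (real (10 * i + d + 11) / real (10 * i + d + 10)) + 1"
proof -
  define c where "c = 10 * i + d + 1"
  have Lc: "L \<le> c" unfolding c_def L_K using assms by simp
  have cpos: "c > 0" unfolding c_def by simp
  have "Ic (c + 10) = Ic c + (\<Sum>q\<in>{c..<c + 10}. Jq q)"
    unfolding Ic_def using Lc sum.atLeastLessThan_concat[of L c "c + 10" Jq] by simp
  also have "(\<Sum>q\<in>{c..<c + 10}. Jq q) = (\<Sum>t<9. Jq (c + t)) + Jq (c + 9)"
  proof -
    have "{..<10::nat} = insert 9 {..<9}" by auto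
    then show ?thesis unfolding sum_shift_n by simp
  qed
  also have "(\<Sum>t<9. Jq (c + t)) = (\<Sum>t<9. real (Suc i) * ln (real (Suc (c + t)) / real (c + t)))"
  proof (rule sum.cong)
    fix t assume "t \<in> {..<9::nat}"
    then have "t < 9" by simp
    from mid_facts[OF this, of i] show "Jq (c + t) = real (Suc i) * ln (real (Suc (c + t)) / real (c + t))"
      unfolding Jq_alt c_def by simp
  qed simp
  also have "\<dots> = real (Suc i) * ln (real (c + 9) / real c)"
    by (simp only: sum_distrib_left[symmetric] tele[OF cpos])
  also have "Jq (c + 9) = (real (Suc i) - real (c + 9)) * ln (real (Suc (c + 9)) / real (c + 9)) + 1"
  proof -
    have e: "c + 9 = 10 * i + d + 10" unfolding c_def by simp
    have s1: "s (10 * i + d + 10) = 1" and g1: "G (10 * i + d + 10) = Suc i" using end_facts by auto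
    show ?thesis unfolding e Jq_alt s1 g1 by simp
  qed
  finally show ?thesis unfolding c_def by (simp add: add_ac)
qed

lemma kk_Suc: "K \<le> i \<Longrightarrow> kk d p (Suc i) = kk d p i + ln (real (10 * i + d + 11) / real (10 * i + d + 10))"
  unfolding kk_def K_def[symmetric] by (simp add: add_ac)

lemma ll_Suc: "K \<le> i \<Longrightarrow> ll d p (Suc i) = ll d p i + real (Suc i) * ln (real (10 * i + d + 11) / real (10 * i + d + 10))"
  unfolding ll_def K_def[symmetric] by (simp add: add_ac)

lemma mm_Suc: "K \<le> i \<Longrightarrow> mm d p (Suc i) = mm d p i + ln (real (10 * i + d + 10) / real (10 * i + d + 1))"
  unfolding mm_def K_def[symmetric] by (simp add: sum.atLeastLessThan_Suc add_ac)

lemma nn_Suc: "K \<le> i \<Longrightarrow> nn d p (Suc i) = nn d p i + real i * ln (real (10 * i + d + 10) / real (10 * i + d + 1))"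
  unfolding nn_def K_def[symmetric] by (simp add: sum.atLeastLessThan_Suc add_ac)

definition F :: "nat \<Rightarrow> real" where
  "F i = real i + 1 - real K - real d * kk d p i - 9 * ll d p i + mm d p i + nn d p i
         + real K * ln ((real L + real d) / real L)"

lemma Ic_base: "Ic (10 * K + d + 1) = F K"
proof -
  have "Ic (L + (d + 1)) = (\<Sum>t<d. Jq (L + t)) + Jq (L + d)"
    unfolding Ic_def sum_shift_n by simp
  also have "(\<Sum>t<d. Jq (L + t)) = (\<Sum>t<d. real K * ln (real (Suc (L + t)) / real (L + t)))"
  proof (rule sum.cong)
    fix t assume "t \<in> {..<d}"
    then have "t < d" by simp
    from low_facts[OF this] show "Jq (L + t) = real K * ln (real (Suc (L + t)) / real (L + t))"
      unfolding Jq_alt by simp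
  qed simp
  also have "\<dots> = real K * ln (real (L + d) / real L)"
    by (simp only: sum_distrib_left[symmetric] tele[OF L_pos])
  also have "Jq (L + d) = (real K - real (L + d)) * ln (real (Suc (L + d)) / real (L + d)) + 1"
    unfolding Jq_alt using lowend_facts by simp
  finally have "Ic (L + (d + 1)) = real K * ln (real (L + d) / real L)
      + ((real K - real (L + d)) * ln (real (Suc (L + d)) / real (L + d)) + 1)" .
  moreover have "kk d p K = ln (real (Suc (L + d)) / real (L + d))"
    unfolding kk_def K_def[symmetric] L_K by (simp add: add_ac)
  moreover have "ll d p K = real K * ln (real (Suc (L + d)) / real (L + d))"
    unfolding ll_def K_def[symmetric] L_K by (simp add: add_ac)
  moreover have "mm d p K = 0" "nn d p K = 0" unfolding mm_def nn_def K_def[symmetric] by simp_all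
  ultimately show ?thesis unfolding F_def L_K by (simp add: algebra_simps)
qed

lemma Ic_F: "K \<le> i \<Longrightarrow> Ic (10 * i + d + 1) = F i"
proof (induction i rule: nat_induct_at_least)
  case base
  then show ?case by (rule Ic_base)
next
  case (Suc i)
  have "Ic (10 * Suc i + d + 1) = Ic (10 * i + d + 11)" by (rule arg_cong[of _ _ Ic]) simp
  also have "\<dots> = F (Suc i)"
    unfolding Ic_step[OF Suc.hyps] Suc.IH F_def kk_Suc[OF Suc.hyps] ll_Suc[OF Suc.hyps]
      mm_Suc[OF Suc.hyps] nn_Suc[OF Suc.hyps]
    by (simp add: algebra_simps)
  finally show ?case .
qed

lemma Ic_top: "Ic (10 * L) = F (L - 1) + real L * ln (real (10 * L) / real (10 * (L - 1) + d + 1))"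
proof -
  define c where "c = 10 * (L - 1) + d + 1"
  have KL: "K \<le> L - 1" using L_K K_pos by simp
  have Lc: "L \<le> c" unfolding c_def using L_K K_pos by simp
  have cpos: "c > 0" unfolding c_def by simp
  have ce: "c + (9 - d) = 10 * L" unfolding c_def using d9 L_ge by simp
  have "Ic (c + (9 - d)) = Ic c + (\<Sum>q\<in>{c..<c + (9 - d)}. Jq q)"
    unfolding Ic_def using Lc sum.atLeastLessThan_concat[of L c "c + (9 - d)" Jq] by simp
  also have "(\<Sum>q\<in>{c..<c + (9 - d)}. Jq q) = (\<Sum>t<9 - d. real L * ln (real (Suc (c + t)) / real (c + t)))"
    unfolding sum_shift_n
  proof (rule sum.cong)
    fix t assume "t \<in> {..<9 - d}"
    then have "t < 9" by simp
    from mid_facts[OF this, of "L - 1"] show "Jq (c + t) = real L * ln (real (Suc (c + t)) / real (c + t))"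
      unfolding Jq_alt c_def using L_ge by simp
  qed simp
  also have "\<dots> = real L * ln (real (c + (9 - d)) / real c)"
    by (simp only: sum_distrib_left[symmetric] tele[OF cpos])
  finally have X: "Ic (c + (9 - d)) = Ic c + real L * ln (real (c + (9 - d)) / real c)" .
  have IcC: "Ic c = F (L - 1)" unfolding c_def by (rule Ic_F[OF KL])
  show ?thesis unfolding c_def[symmetric] using X IcC unfolding ce by simp
qed

lemma alpha_eq: "alpha_formula d p = Ic (10 * L) / (9 * real L)"
proof -
  have rL: "real L = 10 ^ (p - 1)" unfolding L_def by simp
  have rK: "real K = 10 ^ (p - 2)" unfolding K_def by simp
  have p10: "(10::real) ^ p = 10 * real L"
  proof -
    have "p = Suc (p - 1)" using p2 by simp
    then have "(10::real) ^ p = 10 * 10 ^ (p - 1)" by (metis power_Suc)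
    then show ?thesis using rL by simp
  qed
  have LK: "real L = 10 * real K" using L_K by simp
  have Kp: "real K > 0" using K_pos by simp
  have dd: "real (10 * (L - 1) + d + 1) = 10 * real L - 10 + real d + 1" using L_ge by (simp add: of_nat_diff)
  have "Ic (10 * L) / (9 * real L) = (real (L - 1) + 1 - real K) / (9 * real L)
     + (nn d p (L - 1) + mm d p (L - 1) - 9 * ll d p (L - 1) - real d * kk d p (L - 1)) / (9 * real L)
     + (real K / (9 * real L)) * ln ((real L + real d) / real L)
     + (1 / 9) * ln (real (10 * L) / real (10 * (L - 1) + d + 1))"
    unfolding Ic_top F_def using Kp LK by (simp add: field_simps)
  also have "(real (L - 1) + 1 - real K) / (9 * real L) = 1 / 10"
    using L_ge LK Kp by (simp add: of_nat_diff field_simps)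
  also have "real K / (9 * real L) = 1 / 90" using LK Kp by simp
  finally show ?thesis unfolding alpha_formula_def L_def[symmetric] dd p10 rL[symmetric] by simp
qed

end



theorem proposition5:
  fixes p d i :: nat
  assumes "p \<ge> 2" and "d \<le> 9"
    and "10 ^ (p - 2) \<le> i" and "i \<le> 10 ^ (p - 1) - 1"
  shows "(\<lambda>n. Pprob d (10 ^ n - 1) p) \<longlonglongrightarrow> alpha_formula d p
    \<and> (\<lambda>n. Pprob d ((10 * i + d + 1) * 10 ^ (n + 1 - p) - 1) p) \<longlonglongrightarrow>
      (alpha_formula d p * 10 ^ (p - 1) + real i + 1 - 10 ^ (p - 2)
        - real d * kk d p i - 9 * ll d p i + mm d p i + nn d p i
        + 10 ^ (p - 2) * ln ((10 ^ (p - 1) + real d) / 10 ^ (p - 1)))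
      / real (10 * i + d + 1)"
proof -
  interpret digs d p using assms(1,2) by unfold_locales
  have rL: "real L = 10 ^ (p - 1)" unfolding L_def by simp
  have rK: "real K = 10 ^ (p - 2)" unfolding K_def by simp
  have Lpos: "real L > 0" using L_ge by simp
  have I9: "Ic (10 * L) = 9 * real L * alpha_formula d p" using alpha_eq Lpos by simp
  have part1: "(\<lambda>n. Pprob d (10 ^ n - 1) p) \<longlonglongrightarrow> alpha_formula d p"
  proof (rule LIMSEQ_offset[where k = p])
    have pw: "(10::nat) ^ p = 10 * L"
    proof -
      have "p = Suc (p - 1)" using assms(1) by simp
      then have "(10::nat) ^ p = 10 * 10 ^ (p - 1)" by (metis power_Suc)
      then show ?thesis unfolding L_def by simp
    qed
    have eq: "10 ^ (e + p) = 10 * L * 10 ^ e" for e :: nat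
      by (simp add: power_add pw)
    have "(\<lambda>e. Pprob d (10 * L * 10 ^ e - 1) p) \<longlonglongrightarrow> (Ic (10 * L) / 9 + Ic (10 * L)) / real (10 * L)"
      using L_ge by (intro Pprob_lim) auto
    moreover have "(Ic (10 * L) / 9 + Ic (10 * L)) / real (10 * L) = alpha_formula d p"
      unfolding I9 using Lpos by (simp add: field_simps)
    ultimately show "(\<lambda>e. Pprob d (10 ^ (e + p) - 1) p) \<longlonglongrightarrow> alpha_formula d p"
      unfolding eq by simp
  qed
  have part2: "(\<lambda>n. Pprob d ((10 * i + d + 1) * 10 ^ (n + 1 - p) - 1) p) \<longlonglongrightarrow>
      (alpha_formula d p * 10 ^ (p - 1) + real i + 1 - 10 ^ (p - 2)
        - real d * kk d p i - 9 * ll d p i + mm d p i + nn d p i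
        + 10 ^ (p - 2) * ln ((10 ^ (p - 1) + real d) / 10 ^ (p - 1)))
      / real (10 * i + d + 1)"
  proof (rule LIMSEQ_offset[where k = "p - 1"])
    define c where "c = 10 * i + d + 1"
    have Ki: "K \<le> i" using assms(3) unfolding K_def .
    have iL: "i \<le> L - 1" using assms(4) unfolding L_def .
    have c1: "L < c" unfolding c_def L_K using Ki by simp
    have c2: "c \<le> 10 * L" unfolding c_def using iL d9 L_ge by simp
    have ex: "e + (p - 1) + 1 - p = e" for e using assms(1) by simp
    have "(\<lambda>e. Pprob d (c * 10 ^ e - 1) p) \<longlonglongrightarrow> (Ic (10 * L) / 9 + Ic c) / real c"
      using c1 c2 by (rule Pprob_lim)
    moreover have "Ic c = F i" unfolding c_def by (rule Ic_F[OF Ki])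
    ultimately have "(\<lambda>e. Pprob d (c * 10 ^ e - 1) p) \<longlonglongrightarrow> (real L * alpha_formula d p + F i) / real c"
      unfolding I9 by simp
    moreover have "(real L * alpha_formula d p + F i) / real c =
      (alpha_formula d p * 10 ^ (p - 1) + real i + 1 - 10 ^ (p - 2)
        - real d * kk d p i - 9 * ll d p i + mm d p i + nn d p i
        + 10 ^ (p - 2) * ln ((10 ^ (p - 1) + real d) / 10 ^ (p - 1)))
      / real (10 * i + d + 1)"
      unfolding F_def c_def rL rK by (simp add: algebra_simps)
    ultimately show "(\<lambda>e. Pprob d ((10 * i + d + 1) * 10 ^ (e + (p - 1) + 1 - p) - 1) p) \<longlonglongrightarrow>
      (alpha_formula d p * 10 ^ (p - 1) + real i + 1 - 10 ^ (p - 2)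
        - real d * kk d p i - 9 * ll d p i + mm d p i + nn d p i
        + 10 ^ (p - 2) * ln ((10 ^ (p - 1) + real d) / 10 ^ (p - 1)))
      / real (10 * i + d + 1)"
      unfolding ex c_def by simp
  qed
  show ?thesis using part1 part2 by blast
qed



end
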